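(* For every zero-set $\mathcal Z$, $$\tfrac14|\mathcal Z|\le \gamma(\mathcal Z)\le |\mathcal Z|.$$
   Context: Let $\mathbb Z_+=\{0,1,2,\dots\}$ and, for positive integers $a,b$, let $R_{a,b}=([0,a-1]\times[0,b-1])\cap\mathbb Z_+^2$. A (discrete) zero-set is a set $\mathcal Z\subseteq\mathbb Z_+^2$ that is a union of rectangles $R_{a,b}$ (equivalently, $(u,v)\in\mathcal Z$ implies $\{0,\dots,u\}\times\{0,\dots,v\}\subseteq\mathcal Z$); here $\mathcal Z$ is finite, i.e. a Young diagram. For $A\subseteq\mathbb Z_+^2$ and $x\in\mathbb Z_+^2$ let $\mathrm{row}(x,A)$ (resp. $\mathrm{col}(x,A)$) be the number of points of $A$ on the horizontal (resp. vertical) line through $x$. The neighborhood growth transformation is $\mathcal T(A)=A\cup\{x\in\mathbb Z_+^2\setminus A:(\mathrm{row}(x,A),\mathrm{col}(x,A))\notin\mathcal Z\}$. A set $A$ spans if $\bigcup_{t\ge0}\mathcal T^t(A)=\mathbb Z_+^2$. $\gamma(\mathcal Z)$ is the minimum cardinality of a finite spanning set. *)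

theory Defs
  imports Main "HOL-Library.Extended_Nat"
begin

type_synonym pt = "nat \<times> nat"

definition zero_set :: "pt set \<Rightarrow> bool" where
  "zero_set Z \<longleftrightarrow> (\<forall>u v. (u, v) \<in> Z \<longrightarrow> {0..u} \<times> {0..v} \<subseteq> Z)"

definition row_cnt :: "pt \<Rightarrow> pt set \<Rightarrow> enat" where
  "row_cnt x A = (let S = {y \<in> A. snd y = snd x} in
                   if finite S then enat (card S) else \<infinity>)"

definition col_cnt :: "pt \<Rightarrow> pt set \<Rightarrow> enat" where
  "col_cnt x A = (let S = {y \<in> A. fst y = fst x} in
                   if finite S then enat (card S) else \<infinity>)"

definition NG :: "pt set \<Rightarrow> pt set \<Rightarrow> pt set" where
  "NG Z A = A \<union> {x. x \<notin> A \<and>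
     (row_cnt x A, col_cnt x A) \<notin> (\<lambda>(a, b). (enat a, enat b)) ` Z}"

definition spans :: "pt set \<Rightarrow> pt set \<Rightarrow> bool" where
  "spans Z A \<longleftrightarrow> (\<Union>t. (NG Z ^^ t) A) = UNIV"

definition gamma :: "pt set \<Rightarrow> nat" where
  "gamma Z = Inf {card A | A. finite A \<and> spans Z A}"

end

theory Submission
  imports Defs
begin

lemma NG_incl: "A \<subseteq> NG Z A"
  unfolding NG_def by blast

lemma zs_mem:
  assumes "zero_set Z" "(u,v) \<in> Z" "a \<le> u" "b \<le> v"
  shows "(a,b) \<in> Z"
proof -
  have "{0..u} \<times> {0..v} \<subseteq> Z" using assms(1,2) unfolding zero_set_def by blast
  then show ?thesis using assms(3,4) by auto
qed

lemma row_fin: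
  assumes "row_cnt x A = enat a"
  shows "finite {y\<in>A. snd y = snd x} \<and> card {y\<in>A. snd y = snd x} = a"
  using assms unfolding row_cnt_def Let_def by (auto split: if_splits)

lemma col_fin:
  assumes "col_cnt x A = enat a"
  shows "finite {y\<in>A. fst y = fst x} \<and> card {y\<in>A. fst y = fst x} = a"
  using assms unfolding col_cnt_def Let_def by (auto split: if_splits)

lemma upper_step:
  assumes zs: "zero_set Z"
  shows "Z \<subseteq> (NG Z ^^ k) Z \<and> {x. snd x < k} \<subseteq> (NG Z ^^ k) Z"
proof (induction k)
  case 0
  then show ?case by simp
next
  case (Suc k)
  define B where "B = (NG Z ^^ k) Z"
  have ZB: "Z \<subseteq> B" and KB: "{x. snd x < k} \<subseteq> B" using Suc B_def by auto
  have BN: "B \<subseteq> NG Z B" by (rule NG_incl)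
  have "{x. snd x < Suc k} \<subseteq> NG Z B"
  proof
    fix x :: "nat \<times> nat" assume "x \<in> {x. snd x < Suc k}"
    then have "snd x < k \<or> snd x = k" by auto
    then show "x \<in> NG Z B"
    proof
      assume "snd x < k" then show ?thesis using KB BN by auto
    next
      assume sk: "snd x = k"
      show ?thesis
      proof (cases "x \<in> B")
        case True then show ?thesis using BN by auto
      next
        case False
        have "(row_cnt x B, col_cnt x B) \<notin> (\<lambda>(a, b). (enat a, enat b)) ` Z"
        proof
          assume "(row_cnt x B, col_cnt x B) \<in> (\<lambda>(a, b). (enat a, enat b)) ` Z"
          then obtain a b where ab: "(a,b) \<in> Z" "row_cnt x B = enat a" "col_cnt x B = enat b"
            by auto
          from row_fin[OF ab(2)] have S: "finite {y\<in>B. snd y = snd x}" "card {y\<in>B. snd y = snd x} = a" by auto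
          from col_fin[OF ab(3)] have T: "finite {y\<in>B. fst y = fst x}" "card {y\<in>B. fst y = fst x} = b" by auto
          have "(\<lambda>j. (fst x, j)) ` {..<k} \<subseteq> {y\<in>B. fst y = fst x}" using KB by auto
          then have "card ((\<lambda>j. (fst x, j)) ` {..<k}) \<le> b" using T card_mono by metis
          moreover have "card ((\<lambda>j. (fst x, j)) ` {..<k}) = k"
            by (subst card_image) (auto simp: inj_on_def)
          ultimately have kb: "k \<le> b" by simp
          have "(\<lambda>i. (i, k)) ` {..a} \<subseteq> {y\<in>B. snd y = snd x}"
          proof
            fix y assume "y \<in> (\<lambda>i. (i, k)) ` {..a}"
            then obtain i where "i \<le> a" "y = (i,k)" by auto
            then have "y \<in> Z" using zs_mem[OF zs ab(1)] kb by auto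
            then show "y \<in> {y\<in>B. snd y = snd x}" using ZB sk \<open>y = (i,k)\<close> by auto
          qed
          then have "card ((\<lambda>i. (i, k)) ` {..a}) \<le> a" using S card_mono by metis
          moreover have "card ((\<lambda>i. (i, k)) ` {..a}) = Suc a"
            by (subst card_image) (auto simp: inj_on_def)
          ultimately show False by simp
        qed
        then show ?thesis using False unfolding NG_def by auto
      qed
    qed
  qed
  then show ?case using ZB BN B_def by auto
qed

lemma spans_self:
  assumes "zero_set Z"
  shows "spans Z Z"
  unfolding spans_def
proof (rule set_eqI, rule iffI)
  fix x :: "nat \<times> nat"
  assume "x \<in> UNIV"
  have "x \<in> (NG Z ^^ Suc (snd x)) Z" using upper_step[OF assms, of "Suc (snd x)"] by auto
  then show "x \<in> (\<Union>t. (NG Z ^^ t) Z)" by blast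
qed auto

lemma NG_sub:
  assumes "B \<subseteq> C" "zero_set Z" "(u,v) \<in> Z"
    and bd: "\<And>x. x \<notin> C \<Longrightarrow> finite {y\<in>C. snd y = snd x} \<and> card {y\<in>C. snd y = snd x} \<le> u
          \<and> finite {y\<in>C. fst y = fst x} \<and> card {y\<in>C. fst y = fst x} \<le> v"
  shows "NG Z B \<subseteq> C"
proof
  fix x assume xN: "x \<in> NG Z B"
  show "x \<in> C"
  proof (rule ccontr)
    assume xC: "x \<notin> C"
    then have xB: "x \<notin> B" using assms(1) by auto
    have pn: "(row_cnt x B, col_cnt x B) \<notin> (\<lambda>(a, b). (enat a, enat b)) ` Z"
      using xN xB unfolding NG_def by auto
    define S where "S = {y\<in>B. snd y = snd x}"
    define T where "T = {y\<in>B. fst y = fst x}"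
    have SC: "S \<subseteq> {y\<in>C. snd y = snd x}" "T \<subseteq> {y\<in>C. fst y = fst x}"
      using assms(1) S_def T_def by auto
    have fS: "finite S" "finite T" using bd[OF xC] SC finite_subset by metis+
    have cS: "card S \<le> u" "card T \<le> v"
      using bd[OF xC] SC fS card_mono by (metis le_trans)+
    have "row_cnt x B = enat (card S)" using fS unfolding row_cnt_def S_def Let_def by simp
    moreover have "col_cnt x B = enat (card T)" using fS unfolding col_cnt_def T_def Let_def by simp
    moreover have "(card S, card T) \<in> Z" using zs_mem[OF assms(2,3) cS] .
    ultimately show False using pn by force
  qed
qed

lemma NG_iter_sub:
  assumes "B \<subseteq> C" "zero_set Z" "(u,v) \<in> Z"
    and bd: "\<And>x. x \<notin> C \<Longrightarrow> finite {y\<in>C. snd y = snd x} \<and> card {y\<in>C. snd y = snd x} \<le> u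
          \<and> finite {y\<in>C. fst y = fst x} \<and> card {y\<in>C. fst y = fst x} \<le> v"
  shows "(NG Z ^^ t) B \<subseteq> C"
proof (induction t)
  case 0 then show ?case using assms(1) by simp
next
  case (Suc t) then show ?case using NG_sub[OF _ assms(2,3) bd] by simp
qed

definition rc :: "pt set \<Rightarrow> nat \<Rightarrow> nat" where
  "rc A j = card {x\<in>A. snd x = j}"
definition kc :: "pt set \<Rightarrow> nat \<Rightarrow> nat" where
  "kc A i = card {x\<in>A. fst x = i}"

lemma rc_le: "finite A \<Longrightarrow> rc A j \<le> card A"
  unfolding rc_def by (intro card_mono) auto
lemma kc_le: "finite A \<Longrightarrow> kc A j \<le> card A"
  unfolding kc_def by (intro card_mono) auto

lemma rc_pos: "0 < rc A j \<Longrightarrow> j \<in> snd ` A"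
proof -
  assume "0 < rc A j"
  then have "{x\<in>A. snd x = j} \<noteq> {}" unfolding rc_def by (metis card.empty less_irrefl)
  then show ?thesis by force
qed
lemma kc_pos: "0 < kc A j \<Longrightarrow> j \<in> fst ` A"
proof -
  assume "0 < kc A j"
  then have "{x\<in>A. fst x = j} \<noteq> {}" unfolding kc_def by (metis card.empty less_irrefl)
  then show ?thesis by force
qed

lemma key:
  assumes zs: "zero_set Z" and fA: "finite A" and sp: "spans Z A" and uv: "(u,v) \<in> Z"
    and vp: "card {j. u div 2 < rc A j} \<le> v"
  shows "(u+1) div 2 < card {i. v - card {j. u div 2 < rc A j} < kc A i}"
proof (rule ccontr)
  define P where "P = {j. u div 2 < rc A j}"
  define Q where "Q = {i. v - card P < kc A i}"
  assume "\<not> (u+1) div 2 < card {i. v - card {j. u div 2 < rc A j} < kc A i}"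
  then have cQ: "card Q \<le> (u+1) div 2" unfolding Q_def P_def by simp
  have PA: "P \<subseteq> snd ` A" unfolding P_def using rc_pos by (auto intro: rc_pos)
  have QA: "Q \<subseteq> fst ` A" unfolding Q_def by (auto intro: kc_pos)
  have fP: "finite P" using PA fA finite_subset by blast
  have fQ: "finite Q" using QA fA finite_subset by blast
  define C where "C = {x. snd x \<in> P \<or> fst x \<in> Q \<or> x \<in> A}"
  have AC: "A \<subseteq> C" unfolding C_def by auto
  have bd: "finite {y\<in>C. snd y = snd x} \<and> card {y\<in>C. snd y = snd x} \<le> u
          \<and> finite {y\<in>C. fst y = fst x} \<and> card {y\<in>C. fst y = fst x} \<le> v" if xC: "x \<notin> C" for x
  proof -
    have xP: "snd x \<notin> P" and xQ: "fst x \<notin> Q" using xC unfolding C_def by auto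
    have s1: "{y\<in>C. snd y = snd x} \<subseteq> (\<lambda>i. (i, snd x)) ` Q \<union> {y\<in>A. snd y = snd x}"
      unfolding C_def using xP by auto
    have s2: "{y\<in>C. fst y = fst x} \<subseteq> (\<lambda>j. (fst x, j)) ` P \<union> {y\<in>A. fst y = fst x}"
      unfolding C_def using xQ by auto
    have f1: "finite ((\<lambda>i. (i, snd x)) ` Q \<union> {y\<in>A. snd y = snd x})" using fQ fA by auto
    have f2: "finite ((\<lambda>j. (fst x, j)) ` P \<union> {y\<in>A. fst y = fst x})" using fP fA by auto
    have "card {y\<in>C. snd y = snd x} \<le> card ((\<lambda>i. (i, snd x)) ` Q \<union> {y\<in>A. snd y = snd x})"
      using card_mono[OF f1 s1] .
    also have "\<dots> \<le> card ((\<lambda>i. (i, snd x)) ` Q) + card {y\<in>A. snd y = snd x}" by (rule card_Un_le)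
    also have "\<dots> \<le> card Q + rc A (snd x)" unfolding rc_def using card_image_le[OF fQ] by simp
    also have "\<dots> \<le> (u+1) div 2 + u div 2" using cQ xP unfolding P_def by auto
    also have "\<dots> = u" by presburger
    finally have c1: "card {y\<in>C. snd y = snd x} \<le> u" .
    have "card {y\<in>C. fst y = fst x} \<le> card ((\<lambda>j. (fst x, j)) ` P \<union> {y\<in>A. fst y = fst x})"
      using card_mono[OF f2 s2] .
    also have "\<dots> \<le> card ((\<lambda>j. (fst x, j)) ` P) + card {y\<in>A. fst y = fst x}" by (rule card_Un_le)
    also have "\<dots> \<le> card P + kc A (fst x)" unfolding kc_def using card_image_le[OF fP] by simp
    also have "\<dots> \<le> card P + (v - card P)" using xQ unfolding Q_def by auto
    also have "\<dots> = v" using vp P_def by simp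
    finally have c2: "card {y\<in>C. fst y = fst x} \<le> v" .
    show ?thesis using c1 c2 finite_subset[OF s1 f1] finite_subset[OF s2 f2] by auto
  qed
  have sub: "(\<Union>t. (NG Z ^^ t) A) \<subseteq> C"
    using NG_iter_sub[OF AC zs uv bd] by blast
  obtain i where i: "i \<notin> fst ` A"
    using ex_new_if_finite[OF infinite_UNIV_nat, of "fst ` A"] fA by auto
  obtain j where j: "j \<notin> snd ` A"
    using ex_new_if_finite[OF infinite_UNIV_nat, of "snd ` A"] fA by auto
  have "(i,j) \<notin> C" unfolding C_def using i j PA QA by (auto simp: image_iff)
  then show False using sub sp unfolding spans_def by auto
qed

lemma card_rows: "finite A \<Longrightarrow> (\<Sum>j\<in>snd ` A. rc A j) = card A"
  unfolding rc_def
  using sum.image_gen[of A "\<lambda>_. (1::nat)" snd] by simp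

lemma card_cols: "finite A \<Longrightarrow> (\<Sum>j\<in>fst ` A. kc A j) = card A"
  unfolding kc_def
  using sum.image_gen[of A "\<lambda>_. (1::nat)" fst] by simp

lemma card_filter_sum: "finite S \<Longrightarrow> card {x\<in>S. P x} = (\<Sum>x\<in>S. if P x then 1 else 0)"
  using sum.inter_filter[of S "\<lambda>_. 1::nat" P] by simp

lemma lower:
  assumes zs: "zero_set Z" and fZ: "finite Z" and fA: "finite A" and sp: "spans Z A"
  shows "card Z \<le> 4 * card A"
proof -
  define p where "p u = card {j. u div 2 < rc A j}" for u
  define c where "c w = card {i. w < kc A i}" for w
  define M where "M = card A"
  define R where "R = snd ` A"
  define K where "K = fst ` A"
  have fR: "finite R" and fK: "finite K" using fA R_def K_def by auto
  have pR: "p u = card {j\<in>R. u div 2 < rc A j}" for u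
  proof -
    have "\<And>j. u div 2 < rc A j \<Longrightarrow> j \<in> R" unfolding R_def by (rule rc_pos) simp
    then have "{j. u div 2 < rc A j} = {j\<in>R. u div 2 < rc A j}" by blast
    then show ?thesis unfolding p_def by simp
  qed
  have cK: "c w = card {i\<in>K. w < kc A i}" for w
  proof -
    have "\<And>j. w < kc A j \<Longrightarrow> j \<in> K" unfolding K_def by (rule kc_pos) simp
    then have "{j. w < kc A j} = {j\<in>K. w < kc A j}" by blast
    then show ?thesis unfolding c_def by simp
  qed
  obtain N where N: "fst ` Z \<subseteq> {..<N}"
  proof -
    have "finite (fst ` Z)" using fZ by simp
    then show ?thesis using finite_nat_iff_bounded that by blast
  qed
  have fib: "card {x\<in>Z. fst x = u} \<le> p u + card {w\<in>{..<M}. (u+1) div 2 < c w}" for u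
  proof -
    define X where "X = {..<p u} \<union> (\<lambda>w. w + p u) ` {w\<in>{..<M}. (u+1) div 2 < c w}"
    have "{x\<in>Z. fst x = u} \<subseteq> Pair u ` X"
    proof
      fix x assume xz: "x \<in> {x\<in>Z. fst x = u}"
      obtain v where xv: "x = (u,v)" using xz by (cases x) auto
      have v: "(u,v) \<in> Z" using xz xv by auto
      have "v \<in> X"
      proof (cases "v < p u")
        case True then show ?thesis unfolding X_def by auto
      next
        case False
        have k: "(u+1) div 2 < c (v - p u)"
          using key[OF zs fA sp v] False unfolding p_def c_def by auto
        then have "c (v - p u) \<noteq> 0" by auto
        then obtain i where "v - p u < kc A i" unfolding c_def
          by (metis (mono_tags, lifting) card.empty empty_Collect_eq)
        then have "v - p u < M" using kc_le[OF fA, of i] M_def by auto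
        then have "v - p u \<in> {w\<in>{..<M}. (u+1) div 2 < c w}" using k by auto
        moreover have "v = (v - p u) + p u" using False by auto
        ultimately show ?thesis unfolding X_def by blast
      qed
      then show "x \<in> Pair u ` X" using xv by auto
    qed
    moreover have fX: "finite X" unfolding X_def by auto
    ultimately have "card {x\<in>Z. fst x = u} \<le> card (Pair u ` X)"
      by (intro card_mono) auto
    also have "\<dots> \<le> card X" using card_image_le[OF fX] .
    also have "\<dots> \<le> card {..<p u} + card ((\<lambda>w. w + p u) ` {w\<in>{..<M}. (u+1) div 2 < c w})"
      unfolding X_def by (rule card_Un_le)
    also have "\<dots> \<le> p u + card {w\<in>{..<M}. (u+1) div 2 < c w}"
      using card_image_le[of "{w\<in>{..<M}. (u+1) div 2 < c w}" "\<lambda>w. w + p u"] by simp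
    finally show ?thesis .
  qed
  have "card Z = (\<Sum>u\<in>fst ` Z. card {x\<in>Z. fst x = u})"
    using sum.image_gen[OF fZ, of "\<lambda>_. (1::nat)" fst] by simp
  also have "\<dots> \<le> (\<Sum>u<N. card {x\<in>Z. fst x = u})"
    using N by (intro sum_mono2) auto
  also have "\<dots> \<le> (\<Sum>u<N. p u + card {w\<in>{..<M}. (u+1) div 2 < c w})"
    by (intro sum_mono fib)
  also have "\<dots> = (\<Sum>u<N. p u) + (\<Sum>u<N. card {w\<in>{..<M}. (u+1) div 2 < c w})"
    by (rule sum.distrib)
  also have "(\<Sum>u<N. p u) \<le> 2 * M"
  proof -
    have "(\<Sum>u<N. p u) = (\<Sum>u<N. \<Sum>j\<in>R. if u div 2 < rc A j then 1 else 0)"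
      using pR card_filter_sum[OF fR] by simp
    also have "\<dots> = (\<Sum>j\<in>R. \<Sum>u<N. if u div 2 < rc A j then 1 else 0)" by (rule sum.swap)
    also have "\<dots> = (\<Sum>j\<in>R. card {u\<in>{..<N}. u div 2 < rc A j})"
      using card_filter_sum[of "{..<N}"] by simp
    also have "\<dots> \<le> (\<Sum>j\<in>R. 2 * rc A j)"
    proof (rule sum_mono)
      fix j
      have "{u\<in>{..<N}. u div 2 < rc A j} \<subseteq> {..<2 * rc A j}" by auto
      then show "card {u\<in>{..<N}. u div 2 < rc A j} \<le> 2 * rc A j"
        by (metis card_lessThan card_mono finite_lessThan)
    qed
    also have "\<dots> = 2 * (\<Sum>j\<in>R. rc A j)" by (simp add: sum_distrib_left)
    also have "\<dots> = 2 * M" using card_rows[OF fA] R_def M_def by simp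
    finally show ?thesis .
  qed
  also have "(\<Sum>u<N. card {w\<in>{..<M}. (u+1) div 2 < c w}) \<le> 2 * M"
  proof -
    have "(\<Sum>u<N. card {w\<in>{..<M}. (u+1) div 2 < c w})
        = (\<Sum>u<N. \<Sum>w<M. if (u+1) div 2 < c w then 1 else 0)"
      using card_filter_sum[of "{..<M}"] by simp
    also have "\<dots> = (\<Sum>w<M. \<Sum>u<N. if (u+1) div 2 < c w then 1 else 0)" by (rule sum.swap)
    also have "\<dots> = (\<Sum>w<M. card {u\<in>{..<N}. (u+1) div 2 < c w})"
      using card_filter_sum[of "{..<N}"] by simp
    also have "\<dots> \<le> (\<Sum>w<M. 2 * c w)"
    proof (rule sum_mono)
      fix w
      have "{u\<in>{..<N}. (u+1) div 2 < c w} \<subseteq> {..<2 * c w}" by auto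
      then show "card {u\<in>{..<N}. (u+1) div 2 < c w} \<le> 2 * c w"
        by (metis card_lessThan card_mono finite_lessThan)
    qed
    also have "\<dots> = 2 * (\<Sum>w<M. c w)" by (simp add: sum_distrib_left)
    also have "(\<Sum>w<M. c w) \<le> M"
    proof -
      have "(\<Sum>w<M. c w) = (\<Sum>w<M. \<Sum>i\<in>K. if w < kc A i then 1 else 0)"
        using cK card_filter_sum[OF fK] by simp
      also have "\<dots> = (\<Sum>i\<in>K. \<Sum>w<M. if w < kc A i then 1 else 0)" by (rule sum.swap)
      also have "\<dots> = (\<Sum>i\<in>K. card {w\<in>{..<M}. w < kc A i})"
        using card_filter_sum[of "{..<M}"] by simp
      also have "\<dots> \<le> (\<Sum>i\<in>K. kc A i)"
      proof (rule sum_mono)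
        fix i
        have "{w\<in>{..<M}. w < kc A i} \<subseteq> {..<kc A i}" by auto
        then show "card {w\<in>{..<M}. w < kc A i} \<le> kc A i"
          by (metis card_lessThan card_mono finite_lessThan)
      qed
      also have "\<dots> = M" using card_cols[OF fA] K_def M_def by simp
      finally show ?thesis .
    qed
    finally show ?thesis by simp
  qed
  finally show ?thesis using M_def by simp
qed

theorem mainTheorem1:
  fixes Z :: "(nat \<times> nat) set"
  assumes "zero_set Z" and "finite Z"
  shows "(\<exists>A. finite A \<and> spans Z A)
         \<and> real (card Z) / 4 \<le> real (gamma Z)
         \<and> gamma Z \<le> card Z"
proof -
  define S where "S = {card A | A. finite A \<and> spans Z A}"
  have ZS: "card Z \<in> S" using spans_self[OF assms(1)] assms(2) S_def by blast
  have g: "gamma Z = Inf S" unfolding gamma_def S_def by simp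
  have "Inf S \<in> S" using ZS by (metis Inf_nat_def1 empty_iff)
  then obtain A where A: "finite A" "spans Z A" "gamma Z = card A" using g S_def by auto
  have "card Z \<le> 4 * card A" using lower[OF assms A(1,2)] .
  then have l: "real (card Z) / 4 \<le> real (gamma Z)" using A(3) by simp
  have "gamma Z \<le> card Z" using g ZS by (simp add: cInf_lower)
  then show ?thesis using l A by blast
qed

end
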